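(* Consider the input-delay system $\dot x(t)=f(x(t))+g(x(t))u(t-\tau)$, $\tau>0$, operating in an environment whose state satisfies $e(t+\vartheta)=\Gamma(\vartheta,e(t))$ and $\dot e(t+\vartheta)=\dot\Gamma(\vartheta,e(t),\dot e(t))$ for $\vartheta\in[0,\tau]$. Let $H:X\times E\to\mathbb{R}$ be continuously differentiable, $S_{\rm e}=\{(x,e)\in X\times E:H(x,e)\ge0\}$, and suppose $H$ is an ECBF for the delay system with extended class $\mathcal{K}$ function $\alpha$. Suppose Assumption 2 holds: the initial input history $u_0$ satisfies $(\Psi(\vartheta,x_0,u_0),\Gamma(\vartheta,e_0))\in S_{\rm e}$ for all $\vartheta\in[0,\tau]$. Then any locally Lipschitz continuous controller $u=K(x_{\rm p},e_{\rm p},\dot e_{\rm p})$ with $x_{\rm p}=\Psi(\tau,x,u_t)$, $e_{\rm p}=\Gamma(\tau,e)$, $\dot e_{\rm p}=\dot\Gamma(\tau,e,\dot e)$, satisfying $$\dot H(x_{\rm p},e_{\rm p},\dot e_{\rm p},u)\ge-\alpha(H(x_{\rm p},e_{\rm p}))$$ for all $(x,e)\in S_{\rm e}$, $\dot e\in\mathcal{E}$ and $u_t\in\mathcal{B}$, renders $S_{\rm e}$ forward invariant: $(x_0,e_0)\in S_{\rm e}\Rightarrow(x(t),e(t))\in S_{\rm e}$ for all $t\ge0$.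
   Context: $X\subseteq\mathbb{R}^n$ open connected, $U\subseteq\mathbb{R}^m$, $f,g$ locally Lipschitz, $u$ bounded and continuous a.e., solutions exist uniquely for $t\ge0$. Environment state $e(t)\in E\subseteq\mathbb{R}^l$, continuously differentiable, $\dot e(t)\in\mathcal{E}\subseteq\mathbb{R}^l$, $e(0)=e_0$; $\Gamma:[0,\tau]\times E\to E$, $\dot\Gamma:[0,\tau]\times E\times\mathcal{E}\to\mathcal{E}$ are the maps describing its future. $\mathcal{B}$: functions $[-\tau,0)\to U$ bounded and continuous a.e.; $u_t(\theta)=u(t+\theta)$, $\theta\in[-\tau,0)$. Semi-flow $\Psi(\vartheta,x,u_t)=x+\int_0^\vartheta\big(f(\Psi(\varphi,x,u_t))+g(\Psi(\varphi,x,u_t))u_t(\varphi-\tau)\big)d\varphi$, $\vartheta\in[0,\tau]$. $\dot H(x,e,\dot e,u)=\nabla_xH(x,e)(f(x)+g(x)u)+\nabla_eH(x,e)\dot e$. Extended class $\mathcal{K}$ function: continuous strictly increasing $\alpha:(-a,b)\to\mathbb{R}$, $a,b>0$, $\alpha(0)=0$. Definition: $H$ is an ECBF for the delay system with $\tau>0$ if there is an extended class $\mathcal{K}$ function $\alpha$ such that for all $(x,e)\in S_{\rm e}$, $\dot e\in\mathcal{E}$, $u_t\in\mathcal{B}$: $\sup_{u\in U}\dot H(x_{\rm p},e_{\rm p},\dot e_{\rm p},u)\ge-\alpha(H(x_{\rm p},e_{\rm p}))$ with $x_{\rm p}=\Psi(\tau,x,u_t)$, $e_{\rm p}=\Gamma(\tau,e)$,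 $\dot e_{\rm p}=\dot\Gamma(\tau,e,\dot e)$. *)

theory Defs
  imports "HOL-Analysis.Analysis"
begin

definition locally_lipschitz_on :: "'a::metric_space set \<Rightarrow> ('a \<Rightarrow> 'b::metric_space) \<Rightarrow> bool" where
  "locally_lipschitz_on S F \<longleftrightarrow>
     (\<forall>z\<in>S. \<exists>r>0. \<exists>L. \<forall>y1\<in>ball z r \<inter> S. \<forall>y2\<in>ball z r \<inter> S.
        dist (F y1) (F y2) \<le> L * dist y1 y2)"

definition ext_class_K :: "real \<Rightarrow> real \<Rightarrow> (real \<Rightarrow> real) \<Rightarrow> bool" where
  "ext_class_K a b \<alpha> \<longleftrightarrow> a > 0 \<and> b > 0 \<and> continuous_on {-a<..<b} \<alpha>
      \<and> strict_mono_on {-a<..<b} \<alpha> \<and> \<alpha> 0 = 0"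

definition inputs_B :: "real \<Rightarrow> (real^'m) set \<Rightarrow> (real \<Rightarrow> real^'m) set" where
  "inputs_B \<tau> U = {w. (\<forall>\<theta>\<in>{-\<tau>..<0}. w \<theta> \<in> U) \<and> bounded (w ` {-\<tau>..<0})
      \<and> (AE \<theta> in lborel. \<theta> \<in> {-\<tau>..<0} \<longrightarrow> continuous (at \<theta> within {-\<tau>..<0}) w)}"

definition open_loop_sol ::
  "(real^'n) set \<Rightarrow> (real^'n \<Rightarrow> real^'n) \<Rightarrow> (real^'n \<Rightarrow> real^'m^'n) \<Rightarrow> real
   \<Rightarrow> real^'n \<Rightarrow> (real \<Rightarrow> real^'m) \<Rightarrow> (real \<Rightarrow> real^'n) \<Rightarrow> bool" where
  "open_loop_sol X f g \<tau> x w \<xi> \<longleftrightarrow>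
     (\<forall>s\<in>{0..\<tau>}. \<xi> s \<in> X \<and>
        ((\<lambda>\<phi>. f (\<xi> \<phi>) + g (\<xi> \<phi>) *v w (\<phi> - \<tau>)) has_integral (\<xi> s - x)) {0..s})"

definition Psi ::
  "(real^'n) set \<Rightarrow> (real^'n \<Rightarrow> real^'n) \<Rightarrow> (real^'n \<Rightarrow> real^'m^'n) \<Rightarrow> real
   \<Rightarrow> real \<Rightarrow> real^'n \<Rightarrow> (real \<Rightarrow> real^'m) \<Rightarrow> real^'n" where
  "Psi X f g \<tau> vt x w = (THE y. \<exists>\<xi>. open_loop_sol X f g \<tau> x w \<xi> \<and> \<xi> vt = y)"

definition open_loop_wellposed ::
  "(real^'n) set \<Rightarrow> (real^'m) set \<Rightarrow> (real^'n \<Rightarrow> real^'n) \<Rightarrow> (real^'n \<Rightarrow> real^'m^'n) \<Rightarrow> real \<Rightarrow> bool" where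
  "open_loop_wellposed X U f g \<tau> \<longleftrightarrow>
     (\<forall>x\<in>X. \<forall>w\<in>inputs_B \<tau> U.
        (\<exists>\<xi>. open_loop_sol X f g \<tau> x w \<xi>) \<and>
        (\<forall>\<xi>1 \<xi>2. open_loop_sol X f g \<tau> x w \<xi>1 \<longrightarrow> open_loop_sol X f g \<tau> x w \<xi>2
            \<longrightarrow> (\<forall>s\<in>{0..\<tau>}. \<xi>1 s = \<xi>2 s)))"

definition Hdot ::
  "(real^'n \<Rightarrow> real^'l \<Rightarrow> real^'n) \<Rightarrow> (real^'n \<Rightarrow> real^'l \<Rightarrow> real^'l)
   \<Rightarrow> (real^'n \<Rightarrow> real^'n) \<Rightarrow> (real^'n \<Rightarrow> real^'m^'n)
   \<Rightarrow> real^'n \<Rightarrow> real^'l \<Rightarrow> real^'l \<Rightarrow> real^'m \<Rightarrow> real" where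
  "Hdot Hx He f g x e ed u = Hx x e \<bullet> (f x + g x *v u) + He x e \<bullet> ed"

definition safe_set :: "(real^'n) set \<Rightarrow> (real^'l) set \<Rightarrow> (real^'n \<Rightarrow> real^'l \<Rightarrow> real)
    \<Rightarrow> ((real^'n) \<times> (real^'l)) set" where
  "safe_set X E H = {(x, e). x \<in> X \<and> e \<in> E \<and> H x e \<ge> 0}"

definition is_ECBF ::
  "(real^'n) set \<Rightarrow> (real^'m) set \<Rightarrow> (real^'l) set \<Rightarrow> (real^'l) set
   \<Rightarrow> (real^'n \<Rightarrow> real^'n) \<Rightarrow> (real^'n \<Rightarrow> real^'m^'n) \<Rightarrow> real
   \<Rightarrow> (real \<Rightarrow> real^'l \<Rightarrow> real^'l) \<Rightarrow> (real \<Rightarrow> real^'l \<Rightarrow> real^'l \<Rightarrow> real^'l)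
   \<Rightarrow> (real^'n \<Rightarrow> real^'l \<Rightarrow> real)
   \<Rightarrow> (real^'n \<Rightarrow> real^'l \<Rightarrow> real^'n) \<Rightarrow> (real^'n \<Rightarrow> real^'l \<Rightarrow> real^'l)
   \<Rightarrow> (real \<Rightarrow> real) \<Rightarrow> bool" where
  "is_ECBF X U E Ecal f g \<tau> \<Gamma> \<Gamma>d H Hx He \<alpha> \<longleftrightarrow>
     (\<exists>a b. ext_class_K a b \<alpha>) \<and>
     (\<forall>(x, e)\<in>safe_set X E H. \<forall>ed\<in>Ecal. \<forall>w\<in>inputs_B \<tau> U.
        (let xp = Psi X f g \<tau> \<tau> x w; ep = \<Gamma> \<tau> e; edp = \<Gamma>d \<tau> e ed
         in (SUP u\<in>U. ereal (Hdot Hx He f g xp ep edp u)) \<ge> ereal (- \<alpha> (H xp ep))))"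

definition closed_loop_sol ::
  "(real^'n) set \<Rightarrow> (real^'m) set \<Rightarrow> (real^'l) set \<Rightarrow> (real^'l) set
   \<Rightarrow> (real^'n \<Rightarrow> real^'n) \<Rightarrow> (real^'n \<Rightarrow> real^'m^'n) \<Rightarrow> real
   \<Rightarrow> (real \<Rightarrow> real^'l \<Rightarrow> real^'l) \<Rightarrow> (real \<Rightarrow> real^'l \<Rightarrow> real^'l \<Rightarrow> real^'l)
   \<Rightarrow> (real^'n \<Rightarrow> real^'l \<Rightarrow> real^'l \<Rightarrow> real^'m)
   \<Rightarrow> real^'n \<Rightarrow> real^'l \<Rightarrow> (real \<Rightarrow> real^'m)
   \<Rightarrow> (real \<Rightarrow> real^'n) \<Rightarrow> (real \<Rightarrow> real^'m) \<Rightarrow> (real \<Rightarrow> real^'l) \<Rightarrow> (real \<Rightarrow> real^'l) \<Rightarrow> bool" where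
  "closed_loop_sol X U E Ecal f g \<tau> \<Gamma> \<Gamma>d K x0 e0 u0 x u e ed \<longleftrightarrow>
     (\<forall>\<theta>\<in>{-\<tau>..<0}. u \<theta> = u0 \<theta>) \<and>
     (\<forall>t\<ge>0. x t \<in> X) \<and>
     (\<forall>t\<ge>0. ((\<lambda>s. f (x s) + g (x s) *v u (s - \<tau>)) has_integral (x t - x0)) {0..t}) \<and>
     (\<forall>t\<ge>0. (\<lambda>\<theta>. u (t + \<theta>)) \<in> inputs_B \<tau> U) \<and>
     e 0 = e0 \<and>
     (\<forall>t\<ge>0. (e has_vector_derivative ed t) (at t within {0..})) \<and>
     continuous_on {0..} ed \<and>
     (\<forall>t\<ge>0. e t \<in> E \<and> ed t \<in> Ecal) \<and>
     (\<forall>t\<ge>0. \<forall>vt\<in>{0..\<tau>}. e (t + vt) = \<Gamma> vt (e t) \<and> ed (t + vt) = \<Gamma>d vt (e t) (ed t)) \<and>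
     (\<forall>t\<ge>0. u t = K (Psi X f g \<tau> \<tau> (x t) (\<lambda>\<theta>. u (t + \<theta>))) (\<Gamma> \<tau> (e t)) (\<Gamma>d \<tau> (e t) (ed t)))"

end

theory Submission
  imports Defs
begin

lemma ll_cont:
  assumes "locally_lipschitz_on S F" shows "continuous_on S F"
  unfolding continuous_on_iff
proof (intro ballI allI impI)
  fix z \<epsilon> assume z: "z \<in> S" and e: "(0::real) < \<epsilon>"
  obtain r L where r: "r > 0" and L: "\<forall>y1\<in>ball z r \<inter> S. \<forall>y2\<in>ball z r \<inter> S. dist (F y1) (F y2) \<le> L * dist y1 y2"
    using assms z unfolding locally_lipschitz_on_def by blast
  define d where "d = min r (\<epsilon> / (\<bar>L\<bar> + 1))"
  have d: "d > 0" using r e by (simp add: d_def)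
  show "\<exists>d>0. \<forall>x'\<in>S. dist x' z < d \<longrightarrow> dist (F x') (F z) < \<epsilon>"
  proof (intro exI conjI ballI impI, fact d)
    fix y assume y: "y \<in> S" "dist y z < d"
    have "y \<in> ball z r" using y r by (simp add: d_def dist_commute)
    moreover have "z \<in> ball z r" using r by simp
    ultimately have "dist (F y) (F z) \<le> L * dist y z" using L y z by blast
    also have "\<dots> \<le> \<bar>L\<bar> * dist y z" by (simp add: mult_right_mono)
    also have "\<dots> \<le> \<bar>L\<bar> * d" using y by (simp add: mult_left_mono)
    also have "\<dots> < \<epsilon>"
    proof -
      have "d \<le> \<epsilon> / (\<bar>L\<bar> + 1)" by (simp add: d_def)
      then have "\<bar>L\<bar> * d \<le> \<bar>L\<bar> * (\<epsilon> / (\<bar>L\<bar> + 1))" by (rule mult_left_mono) simp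
      also have "\<dots> < \<epsilon>" using e by (simp add: field_simps)
      finally show ?thesis .
    qed
    finally show "dist (F y) (F z) < \<epsilon>" .
  qed
qed

lemma Psi_eq:
  assumes "open_loop_wellposed X U f g \<tau>" "x \<in> X" "w \<in> inputs_B \<tau> U"
    "open_loop_sol X f g \<tau> x w \<xi>" "vt \<in> {0..\<tau>}"
  shows "Psi X f g \<tau> vt x w = \<xi> vt"
  unfolding Psi_def
proof (rule the_equality)
  show "\<exists>\<xi>'. open_loop_sol X f g \<tau> x w \<xi>' \<and> \<xi>' vt = \<xi> vt" using assms by blast
next
  fix y assume "\<exists>\<xi>'. open_loop_sol X f g \<tau> x w \<xi>' \<and> \<xi>' vt = y"
  then obtain \<xi>' where "open_loop_sol X f g \<tau> x w \<xi>'" "\<xi>' vt = y" by blast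
  then show "y = \<xi> vt" using assms unfolding open_loop_wellposed_def by metis
qed

lemma mv_cont:
  fixes A :: "'a::topological_space \<Rightarrow> real^'m^'n" and v :: "'a \<Rightarrow> real^'m"
  assumes "continuous_on S A" "continuous_on S v"
  shows "continuous_on S (\<lambda>s. A s *v v s)"
  unfolding matrix_vector_mult_def
  using assms by (intro continuous_intros) auto

theorem theorem4:
  fixes X :: "(real^'n) set" and U :: "(real^'m) set" and E Ecal :: "(real^'l) set"
    and f :: "real^'n \<Rightarrow> real^'n" and g :: "real^'n \<Rightarrow> real^'m^'n" and \<tau> :: real
    and \<Gamma> :: "real \<Rightarrow> real^'l \<Rightarrow> real^'l" and \<Gamma>d :: "real \<Rightarrow> real^'l \<Rightarrow> real^'l \<Rightarrow> real^'l"
    and H :: "real^'n \<Rightarrow> real^'l \<Rightarrow> real"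
    and Hx :: "real^'n \<Rightarrow> real^'l \<Rightarrow> real^'n" and He :: "real^'n \<Rightarrow> real^'l \<Rightarrow> real^'l"
    and \<alpha> :: "real \<Rightarrow> real"
    and K :: "real^'n \<Rightarrow> real^'l \<Rightarrow> real^'l \<Rightarrow> real^'m"
    and x0 :: "real^'n" and e0 :: "real^'l" and u0 :: "real \<Rightarrow> real^'m"
    and x :: "real \<Rightarrow> real^'n" and u :: "real \<Rightarrow> real^'m"
    and e ed :: "real \<Rightarrow> real^'l"
  assumes tau_pos: "\<tau> > 0"
    and X_open: "open X" and X_conn: "connected X"
    and f_lip: "locally_lipschitz_on X f" and g_lip: "locally_lipschitz_on X g"
    and wellposed: "open_loop_wellposed X U f g \<tau>"
    and Gamma_E: "\<forall>vt\<in>{0..\<tau>}. \<forall>e'\<in>E. \<Gamma> vt e' \<in> E"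
    and Gammad_E: "\<forall>vt\<in>{0..\<tau>}. \<forall>e'\<in>E. \<forall>ed'\<in>Ecal. \<Gamma>d vt e' ed' \<in> Ecal"
    and H_deriv: "\<forall>x'\<in>X. \<forall>e'\<in>E. ((\<lambda>p. H (fst p) (snd p)) has_derivative
                     (\<lambda>(dx, de). Hx x' e' \<bullet> dx + He x' e' \<bullet> de)) (at (x', e'))"
    and Hx_cont: "continuous_on (X \<times> E) (\<lambda>p. Hx (fst p) (snd p))"
    and He_cont: "continuous_on (X \<times> E) (\<lambda>p. He (fst p) (snd p))"
    and ECBF: "is_ECBF X U E Ecal f g \<tau> \<Gamma> \<Gamma>d H Hx He \<alpha>"
    and u0_B: "u0 \<in> inputs_B \<tau> U"
    and assumption2: "\<forall>vt\<in>{0..\<tau>}. (Psi X f g \<tau> vt x0 u0, \<Gamma> vt e0) \<in> safe_set X E H"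
    and K_lip: "locally_lipschitz_on (X \<times> E \<times> Ecal) (\<lambda>(a, b, c). K a b c)"
    and K_U: "\<forall>a\<in>X. \<forall>b\<in>E. \<forall>c\<in>Ecal. K a b c \<in> U"
    and K_cond: "\<forall>(x', e')\<in>safe_set X E H. \<forall>ed'\<in>Ecal. \<forall>w\<in>inputs_B \<tau> U.
                   (let xp = Psi X f g \<tau> \<tau> x' w; ep = \<Gamma> \<tau> e'; edp = \<Gamma>d \<tau> e' ed'
                    in Hdot Hx He f g xp ep edp (K xp ep edp) \<ge> - \<alpha> (H xp ep))"
    and sol: "closed_loop_sol X U E Ecal f g \<tau> \<Gamma> \<Gamma>d K x0 e0 u0 x u e ed"
    and init: "(x0, e0) \<in> safe_set X E H"
  shows "\<forall>t\<ge>0. (x t, e t) \<in> safe_set X E H"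
proof -
  define F where "F s = f (x s) + g (x s) *v u (s - \<tau>)" for s
  define h where "h t = H (x t) (e t)" for t
  note solD = sol[unfolded closed_loop_sol_def]
  have u0eq: "\<forall>\<theta>\<in>{-\<tau>..<0}. u \<theta> = u0 \<theta>" and xX: "\<forall>t\<ge>0. x t \<in> X"
    and xint: "\<forall>t\<ge>0. (F has_integral (x t - x0)) {0..t}"
    and uB: "\<forall>t\<ge>0. (\<lambda>\<theta>. u (t + \<theta>)) \<in> inputs_B \<tau> U"
    and e0: "e 0 = e0" and eder: "\<forall>t\<ge>0. (e has_vector_derivative ed t) (at t within {0..})"
    and edcont: "continuous_on {0..} ed" and eE: "\<forall>t\<ge>0. e t \<in> E \<and> ed t \<in> Ecal"
    and eGam: "\<forall>t\<ge>0. \<forall>vt\<in>{0..\<tau>}. e (t + vt) = \<Gamma> vt (e t) \<and> ed (t + vt) = \<Gamma>d vt (e t) (ed t)"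
    and uK: "\<forall>t\<ge>0. u t = K (Psi X f g \<tau> \<tau> (x t) (\<lambda>\<theta>. u (t + \<theta>))) (\<Gamma> \<tau> (e t)) (\<Gamma>d \<tau> (e t) (ed t))"
    using solD unfolding F_def by auto
  have x0X: "x0 \<in> X" using init by (simp add: safe_set_def)
  have Fint: "F integrable_on {0..B}" if "B \<ge> 0" for B using xint that unfolding integrable_on_def by blast
  have xrep: "x s = x0 + integral {0..s} F" if "s \<ge> 0" for s
  proof -
    have "integral {0..s} F = x s - x0" by (rule integral_unique) (use xint that in auto)
    then show ?thesis by simp
  qed
  have xcont: "continuous_on {0..B} x" for B
  proof (cases "B \<ge> 0")
    case True
    have "continuous_on {0..B} (\<lambda>s. x0 + integral {0..s} F)"
      by (intro continuous_intros indefinite_integral_continuous_1 Fint True)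
    then show ?thesis by (rule continuous_on_eq) (simp add: xrep)
  next
    case False then show ?thesis by simp
  qed
  have econt: "continuous_on {0..} e"
    using eder has_vector_derivative_continuous continuous_on_eq_continuous_within
    by (metis atLeast_iff)
  have Hcont: "continuous_on (X \<times> E) (\<lambda>p. H (fst p) (snd p))"
    using H_deriv by (auto intro!: continuous_at_imp_continuous_on has_derivative_continuous)
  have hcont: "continuous_on {0..B} h" for B
  proof -
    have "continuous_on {0..B} (\<lambda>t. (x t, e t))"
      using xcont econt by (intro continuous_intros) (auto intro: continuous_on_subset)
    moreover have "(\<lambda>t. (x t, e t)) ` {0..B} \<subseteq> X \<times> E" using xX eE by auto
    ultimately have "continuous_on {0..B} ((\<lambda>p. H (fst p) (snd p)) \<circ> (\<lambda>t. (x t, e t)))"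
      by (intro continuous_on_compose continuous_on_subset[OF Hcont])
    then show ?thesis by (simp add: h_def o_def)
  qed
  have shiftsol: "open_loop_sol X f g \<tau> (x t) (\<lambda>\<theta>. u (t + \<theta>)) (\<lambda>s. x (t + s))" if t: "t \<ge> 0" for t
    unfolding open_loop_sol_def
  proof
    fix s assume s: "s \<in> {0..\<tau>}"
    have "x (t+s) \<in> X" using xX t s by auto
    moreover have "((\<lambda>\<phi>. f (x (t + \<phi>)) + g (x (t + \<phi>)) *v u (t + (\<phi> - \<tau>))) has_integral (x (t + s) - x t)) {0..s}"
    proof -
      have i1: "(F has_integral (x (t+s) - x0)) {0..t+s}" using xint t s by auto
      have i2: "(F has_integral (x t - x0)) {0..t}" using xint t by auto
      have "F integrable_on {t..t+s}"
        using i1 integrable_subinterval_real[of F 0 "t+s" t "t+s"] t s by auto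
      then obtain J where J: "(F has_integral J) {t..t+s}" by blast
      have "(F has_integral (x t - x0 + J)) {0..t+s}" using has_integral_combine[OF _ _ i2 J] t s by auto
      then have "x t - x0 + J = x (t+s) - x0" using i1 has_integral_unique by blast
      then have J': "J = x (t+s) - x t" by (simp add: algebra_simps)
      have "((\<lambda>\<phi>. F (\<phi> + t)) has_integral J) {t-t..t+s-t}" by (rule has_integral_shift_real_ivl[OF J])
      then show ?thesis using J' by (simp add: F_def algebra_simps)
    qed
    ultimately show "x (t+s) \<in> X \<and> ((\<lambda>\<phi>. f (x (t + \<phi>)) + g (x (t + \<phi>)) *v (\<lambda>\<theta>. u (t + \<theta>)) (\<phi> - \<tau>)) has_integral (x (t + s) - x t)) {0..s}"
      by simp
  qed
  have xp: "Psi X f g \<tau> \<tau> (x t) (\<lambda>\<theta>. u (t + \<theta>)) = x (t + \<tau>)" if "t \<ge> 0" for t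
    using Psi_eq[OF wellposed _ _ shiftsol[OF that]] xX uB that tau_pos by auto
  have uK': "u t = K (x (t+\<tau>)) (e (t+\<tau>)) (ed (t+\<tau>))" if "t\<ge>0" for t
    using uK xp eGam that tau_pos by auto
  have initsol: "open_loop_sol X f g \<tau> x0 u0 x"
    unfolding open_loop_sol_def
  proof
    fix s assume s: "s \<in> {0..\<tau>}"
    have Fi: "(F has_integral (x s - x0)) {0..s}" using xint s by auto
    have "((\<lambda>\<phi>. f (x \<phi>) + g (x \<phi>) *v u0 (\<phi> - \<tau>)) has_integral (x s - x0)) {0..s}"
    proof (rule has_integral_spike_finite[of "{\<tau>}" _ _ F, OF _ _ Fi])
      fix \<phi> assume "\<phi> \<in> {0..s} - {\<tau>}"
      then have "\<phi> - \<tau> \<in> {-\<tau>..<0}" using s by auto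
      then show "f (x \<phi>) + g (x \<phi>) *v u0 (\<phi> - \<tau>) = F \<phi>" using u0eq by (simp add: F_def)
    qed auto
    then show "x s \<in> X \<and> ((\<lambda>\<phi>. f (x \<phi>) + g (x \<phi>) *v u0 (\<phi> - \<tau>)) has_integral (x s - x0)) {0..s}"
      using xX s by auto
  qed
  have hinit: "h t \<ge> 0" if t: "t \<in> {0..\<tau>}" for t
  proof -
    have "Psi X f g \<tau> t x0 u0 = x t" using Psi_eq[OF wellposed x0X u0_B initsol t] .
    moreover have "e t = \<Gamma> t e0" using eGam e0 t by (metis add_0 order_refl)
    ultimately show ?thesis using assumption2[rule_format, OF t] by (simp add: safe_set_def h_def)
  qed
  have Kcont: "continuous_on (X \<times> E \<times> Ecal) (\<lambda>(a, b, c). K a b c)" by (rule ll_cont[OF K_lip])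
  have fcont: "continuous_on X f" by (rule ll_cont[OF f_lip])
  have gcont: "continuous_on X g" by (rule ll_cont[OF g_lip])
  obtain a b where aK: "ext_class_K a b \<alpha>" using ECBF unfolding is_ECBF_def by blast
  have hder: "\<exists>D. (h has_real_derivative D) (at m) \<and> D \<ge> - \<alpha> (h m)"
    if m: "m > \<tau>" and hs: "h (m - \<tau>) \<ge> 0" for m
  proof -
    define s where "s = m - \<tau>"
    have s0: "s > 0" using m by (simp add: s_def)
    have ms: "m = s + \<tau>" by (simp add: s_def)
    define B where "B = m + 1"
    have Fcont: "continuous_on {\<tau>..B} F"
    proof -
      have c1: "continuous_on {\<tau>..B} x" using xcont[of B] tau_pos by (auto intro: continuous_on_subset)
      have c2: "continuous_on {\<tau>..B} e" using econt tau_pos by (auto intro: continuous_on_subset)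
      have c3: "continuous_on {\<tau>..B} ed" using edcont tau_pos by (auto intro: continuous_on_subset)
      have im: "x ` {\<tau>..B} \<subseteq> X" using xX tau_pos by auto
      have "continuous_on {\<tau>..B} (\<lambda>s. (x s, e s, ed s))" using c1 c2 c3 by (intro continuous_intros)
      moreover have "(\<lambda>s. (x s, e s, ed s)) ` {\<tau>..B} \<subseteq> X \<times> E \<times> Ecal" using xX eE tau_pos by auto
      ultimately have cK: "continuous_on {\<tau>..B} (\<lambda>s. (\<lambda>(a, b, c). K a b c) (x s, e s, ed s))"
        by (rule continuous_on_compose2[OF Kcont])
      have "continuous_on {\<tau>..B} (\<lambda>s. f (x s) + g (x s) *v K (x s) (e s) (ed s))"
        using continuous_on_compose2[OF fcont c1 im] continuous_on_compose2[OF gcont c1 im] cK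
        by (intro continuous_intros mv_cont) auto
      then show ?thesis
      proof (rule continuous_on_eq)
        fix r assume r: "r \<in> {\<tau>..B}"
        then have "u (r - \<tau>) = K (x r) (e r) (ed r)" using uK'[of "r - \<tau>"] by auto
        then show "f (x r) + g (x r) *v K (x r) (e r) (ed r) = F r" by (simp add: F_def)
      qed
    qed
    have mint: "m \<in> interior {\<tau>..B}" using m by (simp add: B_def)
    have Fm: "isCont F m" using continuous_on_interior[OF Fcont mint] .
    have "((\<lambda>r. integral {0..r} F) has_vector_derivative F m) (at m within ({0..B} - {}))"
      by (rule integral_has_vector_derivative_continuous_at)
         (use Fint[of B] m tau_pos Fm in \<open>auto simp: B_def intro: continuous_at_imp_continuous_within\<close>)
    moreover have mi0: "m \<in> interior {0..B}" using m tau_pos by (simp add: B_def)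
    ultimately have Id: "((\<lambda>r. integral {0..r} F) has_vector_derivative F m) (at m)"
      by (simp only: Diff_empty at_within_interior[OF mi0])
    have "((\<lambda>r. x0 + integral {0..r} F) has_vector_derivative F m) (at m)"
      using has_vector_derivative_add[OF has_vector_derivative_const[of x0] Id] by simp
    then have xd: "(x has_vector_derivative F m) (at m)"
      by (rule has_vector_derivative_transform_within_open[of _ _ _ "{0<..}"])
         (use m tau_pos in \<open>auto simp: xrep\<close>)
    have "(e has_vector_derivative ed m) (at m within {0..})" using eder m tau_pos by auto
    moreover have mi1: "m \<in> interior {0..}" using m tau_pos by simp
    ultimately have ed': "(e has_vector_derivative ed m) (at m)" by (simp only: at_within_interior[OF mi1])
    have pd: "((\<lambda>t. (x t, e t)) has_derivative (\<lambda>d. (d *\<^sub>R F m, d *\<^sub>R ed m))) (at m)"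
      using xd ed' unfolding has_vector_derivative_def by (rule has_derivative_Pair)
    have xmX: "x m \<in> X" and emE: "e m \<in> E" using xX eE m tau_pos by auto
    have Hd: "((\<lambda>p. H (fst p) (snd p)) has_derivative (\<lambda>(dx, de). Hx (x m) (e m) \<bullet> dx + He (x m) (e m) \<bullet> de)) (at (x m, e m))"
      using H_deriv xmX emE by blast
    define D where "D = Hx (x m) (e m) \<bullet> F m + He (x m) (e m) \<bullet> ed m"
    have "(((\<lambda>p. H (fst p) (snd p)) \<circ> (\<lambda>t. (x t, e t))) has_derivative
          ((\<lambda>(dx, de). Hx (x m) (e m) \<bullet> dx + He (x m) (e m) \<bullet> de) \<circ> (\<lambda>d. (d *\<^sub>R F m, d *\<^sub>R ed m)))) (at m)"
      by (rule diff_chain_at[OF pd Hd])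
    moreover have "((\<lambda>(dx, de). Hx (x m) (e m) \<bullet> dx + He (x m) (e m) \<bullet> de) \<circ> (\<lambda>d. (d *\<^sub>R F m, d *\<^sub>R ed m))) = (*) D"
      by (auto simp: D_def algebra_simps)
    ultimately have hD: "(h has_real_derivative D) (at m)"
      unfolding has_field_derivative_def by (simp add: h_def[abs_def] o_def)
    have sS: "(x s, e s) \<in> safe_set X E H" using hs xX eE s0 by (auto simp: safe_set_def h_def s_def)
    have edS: "ed s \<in> Ecal" using eE s0 by auto
    have wB: "(\<lambda>\<theta>. u (s + \<theta>)) \<in> inputs_B \<tau> U" using uB s0 by simp
    have KC: "\<forall>ed'\<in>Ecal. \<forall>w\<in>inputs_B \<tau> U.
                   (let xp = Psi X f g \<tau> \<tau> (x s) w; ep = \<Gamma> \<tau> (e s); edp = \<Gamma>d \<tau> (e s) ed'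
                    in Hdot Hx He f g xp ep edp (K xp ep edp) \<ge> - \<alpha> (H xp ep))"
      using bspec[OF K_cond sS] by simp
    have "let xp = Psi X f g \<tau> \<tau> (x s) (\<lambda>\<theta>. u (s + \<theta>)); ep = \<Gamma> \<tau> (e s); edp = \<Gamma>d \<tau> (e s) (ed s)
                    in Hdot Hx He f g xp ep edp (K xp ep edp) \<ge> - \<alpha> (H xp ep)"
      using KC edS wB by blast
    then have "Hdot Hx He f g (x (s + \<tau>)) (\<Gamma> \<tau> (e s)) (\<Gamma>d \<tau> (e s) (ed s)) (K (x (s + \<tau>)) (\<Gamma> \<tau> (e s)) (\<Gamma>d \<tau> (e s) (ed s)))
         \<ge> - \<alpha> (H (x (s + \<tau>)) (\<Gamma> \<tau> (e s)))"
      unfolding Let_def xp[OF less_imp_le[OF s0]] .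
    moreover have "\<Gamma> \<tau> (e s) = e m" "\<Gamma>d \<tau> (e s) (ed s) = ed m" using eGam s0 tau_pos ms by auto
    moreover have "u s = K (x m) (e m) (ed m)" using uK' s0 ms by auto
    ultimately have "D \<ge> - \<alpha> (h m)"
      by (simp add: Hdot_def D_def F_def h_def s_def)
    with hD show ?thesis by blast
  qed
  show ?thesis
  proof (rule ccontr)
    assume "\<not> ?thesis"
    then obtain t0 where t0: "t0 \<ge> 0" "h t0 < 0" using xX eE by (auto simp: safe_set_def h_def)
    define T where "T = {t. t \<ge> 0 \<and> h t < 0}"
    define t1 where "t1 = Inf T"
    have Tne: "T \<noteq> {}" using t0 by (auto simp: T_def)
    have bdd: "bdd_below T" by (auto simp: T_def intro!: bdd_belowI[of _ 0])
    have before: "h t \<ge> 0" if "0 \<le> t" "t < t1" for t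
    proof (rule ccontr)
      assume "\<not> h t \<ge> 0"
      then have "t \<in> T" using that by (auto simp: T_def)
      then have "t1 \<le> t" unfolding t1_def using bdd by (rule cInf_lower)
      then show False using that by simp
    qed
    have t1tau: "t1 \<ge> \<tau>" unfolding t1_def
    proof (rule cInf_greatest[OF Tne])
      fix t assume "t \<in> T"
      then show "\<tau> \<le> t" using hinit[of t] by (force simp: T_def)
    qed
    have ht1: "h t1 \<ge> 0"
    proof -
      have c: "continuous_on (closure {0..<t1}) h" using t1tau tau_pos hcont[of t1] by simp
      have i: "t1 \<in> closure {0..<t1}" using t1tau tau_pos by simp
      show ?thesis using continuous_ge_on_closure[OF c i, of 0] before by auto
    qed
    have apos: "a > 0" using aK by (simp add: ext_class_K_def)
    obtain d where d: "d > 0" and dh: "\<forall>t\<in>{0..t1+1}. dist t t1 < d \<longrightarrow> dist (h t) (h t1) < a"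
    proof -
      have tin: "t1 \<in> {0..t1+1}" using t1tau tau_pos by simp
      show ?thesis using hcont[of "t1+1", unfolded continuous_on_iff, rule_format, OF tin apos] that by blast
    qed
    define \<delta> where "\<delta> = min (min d 1) \<tau>"
    have \<delta>: "\<delta> > 0" using d tau_pos by (simp add: \<delta>_def)
    have "\<exists>t2\<in>T. t2 < t1 + \<delta>" using cInf_less_iff[OF Tne bdd, of "t1 + \<delta>"] \<delta> unfolding t1_def by simp
    then obtain t2 where t2T: "t2 \<in> T" and t2lt: "t2 < t1 + \<delta>" by blast
    have t12: "t1 \<le> t2" unfolding t1_def using t2T bdd by (rule cInf_lower)
    have ht2: "h t2 < 0" using t2T by (simp add: T_def)
    have nearlow: "h t > - a" if "t \<in> {t1..t2}" for t
    proof -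
      have "dist (h t) (h t1) < a" using dh that t2lt t1tau tau_pos
        by (auto simp: \<delta>_def dist_real_def)
      then show ?thesis using ht1 by (simp add: dist_real_def)
    qed
    obtain m where mI: "m \<in> {t1..t2}" and mmin: "\<forall>y\<in>{t1..t2}. h m \<le> h y"
    proof -
      have "continuous_on {t1..t2} h" by (rule continuous_on_subset[OF hcont[of t2]]) (use t1tau tau_pos in auto)
      then show ?thesis using continuous_attains_inf[of "{t1..t2}" h] t12 that by auto
    qed
    have hm: "h m < 0" using mmin t12 ht2 by force
    have mt1: "m > t1" using mI hm ht1 by (cases "m = t1") auto
    have mtau: "m > \<tau>" using mt1 t1tau by simp
    have "h (m - \<tau>) \<ge> 0" using before[of "m - \<tau>"] mI t2lt mtau by (auto simp: \<delta>_def)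
    then obtain D where hD: "(h has_real_derivative D) (at m)" and Dge: "D \<ge> - \<alpha> (h m)"
      using hder mtau by blast
    have sm: "strict_mono_on {-a<..<b} \<alpha>" and bpos: "b > 0" using aK unfolding ext_class_K_def by auto
    have hmI: "h m \<in> {-a<..<b}" using nearlow[OF mI] hm bpos by auto
    have zI: "0 \<in> {-a<..<b}" using apos bpos by auto
    have "\<alpha> (h m) < \<alpha> 0" by (rule strict_mono_onD[OF sm hmI zI hm])
    then have Dpos: "D > 0" using Dge aK by (simp add: ext_class_K_def)
    obtain k where k: "k > 0" and kh: "\<forall>r>0. r < k \<longrightarrow> h (m - r) < h m"
      using DERIV_pos_inc_left[OF hD Dpos] by blast
    define r where "r = min (k/2) ((m - t1)/2)"
    have r: "r > 0" "r < k" using k mt1 by (auto simp: r_def)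
    have "r \<le> (m - t1)/2" unfolding r_def by (rule min.cobounded2)
    then have "m - r \<in> {t1..t2}" using mI mt1 r by auto
    then have "h m \<le> h (m - r)" using mmin by blast
    moreover have "h (m - r) < h m" using kh r by blast
    ultimately show False by simp
  qed
qed

end
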